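(* Fix a base $B>1$. Let $\mathfrak{B}_0$ be a fixed $m$-dimensional box and let $\mathfrak{B}_0\supset\mathfrak{B}_1\supset\cdots$ be a linear-fragmentation process. Then the sequence of box volumes $\mathrm{Vol}_m(\mathfrak{B}_n)$ (the products of the $m$ side lengths of $\mathfrak{B}_n$) converges to strong Benford behavior in base $B$ as $n\to\infty$.
   Context: Significand: for $x>0$, $S_B(x)$ is the unique number in $[1,B)$ with $\log_B x-\log_B S_B(x)\in\mathbb{Z}$. A sequence of positive random variables $X^{(n)}$ converges to strong Benford behavior in base $B$ if $\mathbb{P}(S_B(X^{(n)})\le D)\to\log_B D$ for every $D\in[1,B]$. An $m$-dimensional box is a set $[a_1,b_1]\times\cdots\times[a_m,b_m]$ with finite $a_i<b_i$. A linear-fragmentation process is a sequence of random $m$-dimensional boxes $\mathfrak{B}_0\supset\mathfrak{B}_1\supset\cdots$ where at each step $n\ge1$ independent proportion cuts $P_1^{(n)},\dots,P_m^{(n)}\in(0,1)$ are drawn (independent across $i$ and $n$, $P_i^{(n)}$ distributed as a fixed continuous random variable $P_i$), and the $i$-th side length of $\mathfrak{B}_{n-1}$ is multiplied by $P_i^{(n)}$ to give that of $\mathfrak{B}_n$. It is assumed that $\log_B P_i$ has finite mean, variance and third absolute moment, with $\mathbb{E}[\log_B P_i]=\mu_P$ and $\mathrm{Var}[\log_B P_i]=\sigma_P^2>0$ the same for all $i$. *)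

theory Defs
  imports "HOL-Probability.Probability"
begin

definition significand :: "real \<Rightarrow> real \<Rightarrow> real" where
  "significand B x = x / B powr (of_int \<lfloor>log B x\<rfloor>)"

definition strong_Benford :: "'a measure \<Rightarrow> real \<Rightarrow> (nat \<Rightarrow> 'a \<Rightarrow> real) \<Rightarrow> bool" where
  "strong_Benford M B X \<longleftrightarrow>
     (\<forall>D\<in>{1..B}. (\<lambda>n. measure M {\<omega>\<in>space M. significand B (X n \<omega>) \<le> D}) \<longlonglongrightarrow> log B D)"

definition box_vol :: "nat \<Rightarrow> (nat \<Rightarrow> real) \<Rightarrow> (nat \<Rightarrow> real) \<Rightarrow> real" where
  "box_vol m lo hi = (\<Prod>i<m. hi i - lo i)"

end

theory Submission
  imports Defs
begin


lemma circle_lift: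
  fixes g :: "real \<Rightarrow> real"
  assumes g: "continuous_on {0..1} g" and g01: "g 0 = g 1"
  shows "\<exists>G. continuous_on (sphere (0::complex) 1) G \<and> (\<forall>\<theta>\<in>{0..1}. G (cis (2*pi*\<theta>)) = g \<theta>)"
proof -
  define f where "f \<theta> = cis (2*pi*\<theta>)" for \<theta>
  define G where "G z = g (Arg2pi z / (2*pi))" for z
  have fS: "f ` {0..1} = sphere 0 1"
  proof
    show "f ` {0..1} \<subseteq> sphere 0 1" by (auto simp: f_def)
    show "sphere 0 1 \<subseteq> f ` {0..1}"
    proof
      fix z :: complex assume z: "z \<in> sphere 0 1"
      have "z = cis (Arg2pi z)"
        using Arg2pi[of z] z by (auto simp: is_Arg_def cis_conv_exp)
      moreover have "Arg2pi z / (2*pi) \<in> {0..1}"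
        using Arg2pi[of z] by auto
      ultimately show "z \<in> f ` {0..1}" unfolding f_def
        by (intro image_eqI[of _ _ "Arg2pi z / (2*pi)"]) auto
    qed
  qed
  have Gf: "G (f \<theta>) = g \<theta>" if "\<theta> \<in> {0..1}" for \<theta>
  proof (cases "\<theta> = 1")
    case True
    then show ?thesis using g01 Arg2pi_of_real[of 1] by (simp add: G_def f_def)
  next
    case False
    with that have "Arg2pi (f \<theta>) = 2*pi*\<theta>"
      by (intro Arg2pi_unique[of 1]) (auto simp: f_def cis_conv_exp)
    then show ?thesis by (simp add: G_def)
  qed
  have q: "quotient_map (top_of_set {0..1}) (top_of_set (sphere 0 1)) f"
  proof (rule continuous_imp_quotient_map)
    show "continuous_map (top_of_set {0..1}) (top_of_set (sphere 0 1)) f"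
      using fS unfolding f_def
      by (auto simp: continuous_map_in_subtopology intro!: continuous_intros)
    show "compact_space (top_of_set {0..1::real})"
      by (simp add: compact_space_subtopology)
    show "Hausdorff_space (top_of_set (sphere (0::complex) 1))"
      by (simp add: Hausdorff_space_subtopology)
    show "f ` topspace (top_of_set {0..1}) = topspace (top_of_set (sphere 0 1))"
      using fS by simp
  qed
  have "continuous_map (top_of_set {0..1}) euclideanreal (G \<circ> f)"
  proof -
    have "continuous_map (top_of_set {0..1}) euclideanreal g"
      using g by simp
    then show ?thesis
      by (rule continuous_map_eq) (auto simp: Gf)
  qed
  then have "continuous_map (top_of_set (sphere 0 1)) euclideanreal G"
    by (rule continuous_compose_quotient_map[OF q])
  then show ?thesis using Gf unfolding f_def by (intro exI[of _ G]) auto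
qed

definition trigp :: "(int \<Rightarrow> complex) \<Rightarrow> int set \<Rightarrow> real \<Rightarrow> complex" where
  "trigp c H \<theta> = (\<Sum>h\<in>H. c h * cis (2*pi * of_int h*\<theta>))"

lemma trigp_extend:
  assumes "finite H'" "H \<subseteq> H'"
  shows "trigp c H \<theta> = trigp (\<lambda>h. if h \<in> H then c h else 0) H' \<theta>"
  unfolding trigp_def using assms
  by (intro sum.mono_neutral_cong_left) auto

lemma trigp_add:
  assumes "finite H1" "finite H2"
  shows "trigp c1 H1 \<theta> + trigp c2 H2 \<theta> =
    trigp (\<lambda>h. (if h \<in> H1 then c1 h else 0) + (if h \<in> H2 then c2 h else 0)) (H1 \<union> H2) \<theta>"
  using assms
  by (simp add: trigp_extend[of "H1 \<union> H2" H1 c1] trigp_extend[of "H1 \<union> H2" H2 c2])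
     (simp add: trigp_def sum.distrib distrib_right)

lemma trigp_mult:
  assumes "finite H1" "finite H2"
  shows "trigp c1 H1 \<theta> * trigp c2 H2 \<theta> =
    trigp (\<lambda>h. \<Sum>p\<in>{p\<in>H1\<times>H2. fst p + snd p = h}. c1 (fst p) * c2 (snd p))
       ((\<lambda>p. fst p + snd p) ` (H1 \<times> H2)) \<theta>"
proof -
  have "trigp c1 H1 \<theta> * trigp c2 H2 \<theta> =
      (\<Sum>p\<in>H1\<times>H2. c1 (fst p) * c2 (snd p) * cis (2*pi * of_int (fst p + snd p)*\<theta>))"
    unfolding trigp_def sum_product sum.cartesian_product
    by (intro sum.cong refl) (auto simp: cis_mult algebra_simps)
  also have "\<dots> = (\<Sum>h\<in>(\<lambda>p. fst p + snd p) ` (H1 \<times> H2).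
       \<Sum>p\<in>{p\<in>H1\<times>H2. fst p + snd p = h}. c1 (fst p) * c2 (snd p) * cis (2*pi * of_int (fst p + snd p)*\<theta>))"
    using assms by (intro sum.group[symmetric]) auto
  also have "\<dots> = trigp (\<lambda>h. \<Sum>p\<in>{p\<in>H1\<times>H2. fst p + snd p = h}. c1 (fst p) * c2 (snd p))
       ((\<lambda>p. fst p + snd p) ` (H1 \<times> H2)) \<theta>"
    unfolding trigp_def sum_distrib_right
    by (intro sum.cong refl) auto
  finally show ?thesis .
qed

definition trigR :: "(complex \<Rightarrow> real) set" where
  "trigR = {G. continuous_on (sphere 0 1) G \<and>
     (\<exists>c H. finite H \<and> (\<forall>\<theta>. complex_of_real (G (cis (2*pi*\<theta>))) = trigp c H \<theta>))}"

lemma trigR_ring: "function_ring_on trigR (sphere 0 1)"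
proof
  show "compact (sphere (0::complex) 1)" by simp
  show "continuous_on (sphere 0 1) f" if "f \<in> trigR" for f
    using that by (simp add: trigR_def)
  show "(\<lambda>x. f x + g x) \<in> trigR" if "f \<in> trigR" "g \<in> trigR" for f g
  proof -
    from that obtain c1 H1 c2 H2 where "finite H1" "finite H2"
      "\<forall>\<theta>. complex_of_real (f (cis (2*pi*\<theta>))) = trigp c1 H1 \<theta>"
      "\<forall>\<theta>. complex_of_real (g (cis (2*pi*\<theta>))) = trigp c2 H2 \<theta>"
      and "continuous_on (sphere 0 1) f" "continuous_on (sphere 0 1) g"
      by (auto simp: trigR_def)
    then show ?thesis unfolding trigR_def
      by (auto intro!: continuous_intros exI[of _ "\<lambda>h. (if h \<in> H1 then c1 h else 0) + (if h \<in> H2 then c2 h else 0)"] exI[of _ "H1 \<union> H2"] simp: trigp_add)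
  qed
  show "(\<lambda>x. f x * g x) \<in> trigR" if "f \<in> trigR" "g \<in> trigR" for f g
  proof -
    from that obtain c1 H1 c2 H2 where "finite H1" "finite H2"
      "\<forall>\<theta>. complex_of_real (f (cis (2*pi*\<theta>))) = trigp c1 H1 \<theta>"
      "\<forall>\<theta>. complex_of_real (g (cis (2*pi*\<theta>))) = trigp c2 H2 \<theta>"
      and "continuous_on (sphere 0 1) f" "continuous_on (sphere 0 1) g"
      by (auto simp: trigR_def)
    then show ?thesis unfolding trigR_def
      by (auto intro!: continuous_intros exI[of _ "\<lambda>h. \<Sum>p\<in>{p\<in>H1\<times>H2. fst p + snd p = h}. c1 (fst p) * c2 (snd p)"] exI[of _ "(\<lambda>p. fst p + snd p) ` (H1 \<times> H2)"] simp: trigp_mult)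
  qed
  show "(\<lambda>_. c) \<in> trigR" for c
    unfolding trigR_def
    by (auto intro!: exI[of _ "{0}"] exI[of _ "\<lambda>_. complex_of_real c"] simp: trigp_def)
  show "\<exists>f\<in>trigR. f x \<noteq> f y" if "x \<in> sphere 0 1" "y \<in> sphere 0 1" "x \<noteq> y" for x y
  proof -
    have Re: "Re \<in> trigR"
    proof -
      have "complex_of_real (Re (cis (2*pi*\<theta>))) = trigp (\<lambda>_. 1/2) {1,-1} \<theta>" for \<theta>
        by (simp add: trigp_def complex_eq_iff)
      then show ?thesis unfolding trigR_def
        by (auto intro!: continuous_intros exI[of _ "{1,-1}"])
    qed
    have Im: "Im \<in> trigR"
    proof -
      have "complex_of_real (Im (cis (2*pi*\<theta>))) = trigp (\<lambda>h. if h = 1 then -\<i>/2 else \<i>/2) {1,-1} \<theta>" for \<theta>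
        by (simp add: trigp_def complex_eq_iff)
      then show ?thesis unfolding trigR_def
        by (auto intro!: continuous_intros exI[of _ "{1,-1}"])
    qed
    from that have "Re x \<noteq> Re y \<or> Im x \<noteq> Im y" by (auto simp: complex_eq_iff)
    then show ?thesis using Re Im by blast
  qed
qed

lemma trig_approx:
  fixes g :: "real \<Rightarrow> real"
  assumes g: "continuous_on {0..1} g" and g01: "g 0 = g 1" and e: "e > 0"
  shows "\<exists>T c H. finite H \<and> (\<forall>\<theta>. complex_of_real (T \<theta>) = trigp c H \<theta>) \<and> (\<forall>\<theta>\<in>{0..1}. \<bar>g \<theta> - T \<theta>\<bar> < e)"
proof -
  obtain G where G: "continuous_on (sphere (0::complex) 1) G" "\<forall>\<theta>\<in>{0..1}. G (cis (2*pi*\<theta>)) = g \<theta>"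
    using circle_lift[OF g g01] by blast
  obtain F where F: "F \<in> trigR" "\<forall>z\<in>sphere 0 1. \<bar>G z - F z\<bar> < e"
    using function_ring_on.Stone_Weierstrass_basic[OF trigR_ring G(1) e] by blast
  from F(1) obtain c H where "finite H" "\<forall>\<theta>. complex_of_real (F (cis (2*pi*\<theta>))) = trigp c H \<theta>"
    by (auto simp: trigR_def)
  moreover have "\<bar>g \<theta> - F (cis (2*pi*\<theta>))\<bar> < e" if "\<theta> \<in> {0..1}" for \<theta>
  proof -
    have "cis (2*pi*\<theta>) \<in> sphere 0 1" by simp
    then show ?thesis using F(2) G(2) that by metis
  qed
  ultimately show ?thesis
    by (intro exI[of _ "\<lambda>\<theta>. F (cis (2*pi*\<theta>))"] exI[of _ c] exI[of _ H]) (auto simp: dist_norm)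
qed


lemma has_vector_derivative_cis_lin:
  "((\<lambda>\<theta>::real. cis (a*\<theta>)) has_vector_derivative (\<i> * a * cis (a*x))) (at x within S)"
  by (auto intro!: derivative_eq_intros simp: has_vector_derivative_complex_iff)

lemma integral_cis_01:
  "set_lebesgue_integral lborel {0..1} (\<lambda>\<theta>. cis (2*pi * of_int h * \<theta>)) = (if h = 0 then 1 else 0)"
proof -
  define a where "a = 2*pi * of_int h"
  have "set_lebesgue_integral lborel {0..1} (\<lambda>\<theta>. cis (a * \<theta>)) = (CLBINT \<theta>=ereal 0..ereal 1. cis (a * \<theta>))"
    by (subst interval_integral_Icc) auto
  also have "\<dots> = (if h = 0 then 1 else 0)"
  proof (cases "h = 0")
    case True
    have "(CLBINT \<theta>=ereal 0..ereal 1. cis (a * \<theta>)) = complex_of_real 1 - complex_of_real 0"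
      by (rule interval_integral_FTC_finite[where F="\<lambda>x. complex_of_real x"])
        (auto intro!: derivative_eq_intros continuous_intros simp: a_def True has_vector_derivative_complex_iff)
    then show ?thesis using True by simp
  next
    case False
    have a: "a \<noteq> 0" using False by (simp add: a_def)
    have "(CLBINT \<theta>=ereal 0..ereal 1. cis (a * \<theta>)) = (-\<i>/a) * cis (a*1) - (-\<i>/a) * cis (a*0)"
    proof (rule interval_integral_FTC_finite)
      show "continuous_on {min 0 1..max 0 1} (\<lambda>\<theta>. cis (a * \<theta>))"
        by (intro continuous_intros)
      fix x :: real
      have "((\<lambda>\<theta>. (-\<i>/a) * cis (a*\<theta>)) has_vector_derivative (-\<i>/a) * (\<i> * a * cis (a*x))) (at x within {min 0 1..max 0 1})"
        by (intro derivative_intros has_vector_derivative_cis_lin)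
      moreover have "(-\<i>/a) * (\<i> * a * cis (a*x)) = cis (a*x)" using a by (simp add: field_simps)
      ultimately show "((\<lambda>\<theta>. (-\<i>/a) * cis (a*\<theta>)) has_vector_derivative cis (a*x)) (at x within {min 0 1..max 0 1})"
        by simp
    qed
    also have "cis (a*1) = 1" unfolding a_def by (simp add: cis_multiple_2pi)
    finally show ?thesis using False by (simp add: a_def)
  qed
  finally show ?thesis by (simp add: a_def)
qed
definition c0 :: "(int \<Rightarrow> complex) \<Rightarrow> int set \<Rightarrow> complex" where
  "c0 c H = (if 0 \<in> H then c 0 else 0)"

lemma integral_trigp_01:
  assumes "finite H"
  shows "set_lebesgue_integral lborel {0..1} (trigp c H) = c0 c H"
proof -
  have int: "set_integrable lborel {0..1} (\<lambda>\<theta>. cis (2*pi * of_int h * \<theta>))" for h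
    by (intro borel_integrable_atLeastAtMost' continuous_intros)
  have "set_lebesgue_integral lborel {0..1} (trigp c H) =
      (\<Sum>h\<in>H. set_lebesgue_integral lborel {0..1} (\<lambda>\<theta>. c h * cis (2*pi * of_int h * \<theta>)))"
    unfolding set_lebesgue_integral_def trigp_def scaleR_sum_right
  proof (intro Bochner_Integration.integral_sum)
    fix h
    show "integrable lborel (\<lambda>\<theta>. indicator {0..1} \<theta> *\<^sub>R (c h * cis (2*pi * of_int h * \<theta>)))"
      using integrable_mult_right[OF int[of h, unfolded set_integrable_def], of "c h"]
      by (simp add: mult_scaleR_right)
  qed
  also have "\<dots> = (\<Sum>h\<in>H. c h * (if h = 0 then 1 else 0))"
    by (intro sum.cong refl) (simp add: set_integral_mult_right integral_cis_01[symmetric])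
  also have "\<dots> = c0 c H" using assms by (simp add: c0_def if_distrib cong: if_cong)
  finally show ?thesis .
qed

lemma integral_trigp_01_real:
  assumes "finite H" "\<And>\<theta>. complex_of_real (T \<theta>) = trigp c H \<theta>"
  shows "set_lebesgue_integral lborel {0..1} T = Re (c0 c H)"
proof -
  have "complex_of_real (set_lebesgue_integral lborel {0..1} T) = set_lebesgue_integral lborel {0..1} (\<lambda>\<theta>. complex_of_real (T \<theta>))"
    unfolding set_lebesgue_integral_def integral_complex_of_real[symmetric]
    by (simp add: scaleR_conv_of_real)
  also have "\<dots> = c0 c H" using assms by (simp add: integral_trigp_01)
  finally show ?thesis by (metis Re_complex_of_real)
qed

lemma expectation_trigp_lim:
  assumes M: "prob_space M" and Zm: "\<And>n. Z n \<in> borel_measurable M"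
    and hyp: "\<And>h::int. h \<noteq> 0 \<Longrightarrow> (\<lambda>n. \<integral>\<omega>. cis (2*pi * of_int h * Z n \<omega>) \<partial>M) \<longlonglongrightarrow> 0"
    and H: "finite H" and T: "\<And>\<theta>. complex_of_real (T \<theta>) = trigp c H \<theta>"
  shows "(\<lambda>n. \<integral>\<omega>. T (Z n \<omega>) \<partial>M) \<longlonglongrightarrow> Re (c0 c H)"
proof -
  interpret prob_space M by (rule M)
  have int: "integrable M (\<lambda>\<omega>. cis (2*pi * of_int h * Z n \<omega>))" for h n
    by (rule integrable_const_bound[where B=1]) (auto intro!: measurable_compose[OF Zm] borel_measurable_continuous_onI continuous_intros)
  have eq: "complex_of_real (\<integral>\<omega>. T (Z n \<omega>) \<partial>M) = (\<Sum>h\<in>H. c h * (\<integral>\<omega>. cis (2*pi * of_int h * Z n \<omega>) \<partial>M))" for n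
  proof -
    have "complex_of_real (\<integral>\<omega>. T (Z n \<omega>) \<partial>M) = (\<integral>\<omega>. trigp c H (Z n \<omega>) \<partial>M)"
      by (simp add: T[symmetric])
    also have "\<dots> = (\<Sum>h\<in>H. c h * (\<integral>\<omega>. cis (2*pi * of_int h * Z n \<omega>) \<partial>M))"
      unfolding trigp_def
      by (subst Bochner_Integration.integral_sum) (auto intro!: int)
    finally show ?thesis .
  qed
  have "(\<lambda>n. \<Sum>h\<in>H. c h * (\<integral>\<omega>. cis (2*pi * of_int h * Z n \<omega>) \<partial>M)) \<longlonglongrightarrow> (\<Sum>h\<in>H. c h * (if h = 0 then 1 else 0))"
  proof (intro tendsto_intros)
    fix h assume "h \<in> H"
    show "(\<lambda>n. \<integral>\<omega>. cis (2*pi * of_int h * Z n \<omega>) \<partial>M) \<longlonglongrightarrow> (if h = 0 then 1 else 0)"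
      using hyp[of h] by (cases "h = 0") (simp_all add: prob_space)
  qed
  also have "(\<Sum>h\<in>H. c h * (if h = 0 then 1 else 0)) = c0 c H"
    using H by (simp add: c0_def if_distrib cong: if_cong)
  finally have "(\<lambda>n. complex_of_real (\<integral>\<omega>. T (Z n \<omega>) \<partial>M)) \<longlonglongrightarrow> c0 c H"
    by (simp add: eq)
  from tendsto_Re[OF this] show ?thesis by simp
qed


lemma cis_int_period: "cis (2*pi * of_int h * (x - of_int k)) = cis (2*pi * of_int h * x)"
proof -
  have "cis (2*pi * of_int h * (x - of_int k)) = cis (2*pi * of_int h * x) * cis (2*pi * of_int (- h * k))"
    by (simp add: cis_mult algebra_simps)
  also have "cis (2*pi * of_int (- h * k)) = 1"
    by (rule cis_multiple_2pi) simp
  finally show ?thesis by simp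
qed

lemma trigp_frac: "trigp c H (frac x) = trigp c H x"
  unfolding trigp_def frac_def by (simp add: cis_int_period)

lemma trigp_bound: "finite H \<Longrightarrow> norm (trigp c H x) \<le> (\<Sum>h\<in>H. norm (c h))"
  unfolding trigp_def
  by (rule order.trans[OF norm_sum]) (simp add: norm_mult)

lemma continuous_trigp: "continuous_on A (trigp c H)"
  unfolding trigp_def by (intro continuous_intros)

lemma borel_measurable_frac' [measurable]: "(frac :: real \<Rightarrow> real) \<in> borel_measurable borel"
  unfolding frac_def by measurable

lemma weyl_helper:
  assumes M: "prob_space M" and Zm: "\<And>n. Z n \<in> borel_measurable M"
    and hyp: "\<And>h::int. h \<noteq> 0 \<Longrightarrow> (\<lambda>n. \<integral>\<omega>. cis (2*pi * of_int h * Z n \<omega>) \<partial>M) \<longlonglongrightarrow> 0"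
    and gc: "continuous_on UNIV g" and g01: "g 0 = g 1" and e: "e > 0"
  shows "\<exists>T c H. finite H \<and> (\<forall>\<theta>. complex_of_real (T \<theta>) = trigp c H \<theta>) \<and>
     (\<forall>\<theta>\<in>{0..1}. \<bar>g \<theta> - T \<theta>\<bar> < e) \<and>
     (\<forall>n. integrable M (\<lambda>\<omega>. T (frac (Z n \<omega>)))) \<and>
     (\<lambda>n. \<integral>\<omega>. T (frac (Z n \<omega>)) \<partial>M) \<longlonglongrightarrow> set_lebesgue_integral lborel {0..1} T"
proof -
  interpret prob_space M by (rule M)
  obtain T c H where H: "finite H" and T: "\<forall>\<theta>. complex_of_real (T \<theta>) = trigp c H \<theta>"
    and app: "\<forall>\<theta>\<in>{0..1}. \<bar>g \<theta> - T \<theta>\<bar> < e"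
    using trig_approx[OF continuous_on_subset[OF gc] g01 e] by auto
  have Teq: "T = (\<lambda>\<theta>. Re (trigp c H \<theta>))"
    using T by (metis Re_complex_of_real)
  have Tf: "T (frac x) = T x" for x unfolding Teq by (simp add: trigp_frac)
  have Tm: "T \<in> borel_measurable borel"
    unfolding Teq by (intro borel_measurable_continuous_onI continuous_intros continuous_trigp)
  have int: "integrable M (\<lambda>\<omega>. T (frac (Z n \<omega>)))" for n
  proof (rule integrable_const_bound[where B="\<Sum>h\<in>H. norm (c h)"])
    show "AE x in M. norm (T (frac (Z n x))) \<le> (\<Sum>h\<in>H. norm (c h))"
      using trigp_bound[OF H] abs_Re_le_cmod unfolding Teq
      by (intro AE_I2) (metis order.trans real_norm_def)
    show "(\<lambda>\<omega>. T (frac (Z n \<omega>))) \<in> borel_measurable M"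
      using Tm Zm by measurable
  qed
  have lim: "(\<lambda>n. \<integral>\<omega>. T (frac (Z n \<omega>)) \<partial>M) \<longlonglongrightarrow> set_lebesgue_integral lborel {0..1} T"
    unfolding Tf integral_trigp_01_real[OF H T[rule_format]]
    by (rule expectation_trigp_lim[OF M Zm hyp H T[rule_format]])
  show ?thesis using H T app int lim by blast
qed

lemma weyl_upper:
  assumes M: "prob_space M" and Zm: "\<And>n. Z n \<in> borel_measurable M"
    and hyp: "\<And>h::int. h \<noteq> 0 \<Longrightarrow> (\<lambda>n. \<integral>\<omega>. cis (2*pi * of_int h * Z n \<omega>) \<partial>M) \<longlonglongrightarrow> 0"
    and gc: "continuous_on UNIV g" and g01: "g 0 = g 1" and gb: "\<And>\<theta>. 0 \<le> g \<theta> \<and> g \<theta> \<le> 1"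
    and ind: "\<And>\<theta>. 0 \<le> \<theta> \<Longrightarrow> \<theta> < 1 \<Longrightarrow> \<theta> \<le> t \<Longrightarrow> 1 \<le> g \<theta>"
    and e: "e > 0"
  shows "eventually (\<lambda>n. measure M {\<omega>\<in>space M. frac (Z n \<omega>) \<le> t} < set_lebesgue_integral lborel {0..1} g + e) sequentially"
proof -
  interpret prob_space M by (rule M)
  obtain T c H where H: "finite H" and T: "\<forall>\<theta>. complex_of_real (T \<theta>) = trigp c H \<theta>"
    and app: "\<forall>\<theta>\<in>{0..1}. \<bar>g \<theta> - T \<theta>\<bar> < e/3"
    and int: "\<And>n. integrable M (\<lambda>\<omega>. T (frac (Z n \<omega>)))"
    and lim: "(\<lambda>n. \<integral>\<omega>. T (frac (Z n \<omega>)) \<partial>M) \<longlonglongrightarrow> set_lebesgue_integral lborel {0..1} T"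
    using weyl_helper[OF M Zm hyp gc g01, of "e/3"] e by auto
  have Teq: "T = (\<lambda>\<theta>. Re (trigp c H \<theta>))"
    using T by (metis Re_complex_of_real)
  have gm: "g \<in> borel_measurable borel" using gc by (rule borel_measurable_continuous_onI)
  have sT: "set_integrable lborel {0..1} T"
    unfolding Teq by (intro borel_integrable_atLeastAtMost' continuous_intros continuous_trigp)
  have sg: "set_integrable lborel {0..1} g"
    by (intro borel_integrable_atLeastAtMost' continuous_on_subset[OF gc]) auto
  have "set_lebesgue_integral lborel {0..1} T \<le> set_lebesgue_integral lborel {0..1} (\<lambda>\<theta>. g \<theta> + e/3)"
  proof (intro set_integral_mono sT set_integral_add sg)
    show "set_integrable lborel {0..1::real} (\<lambda>_. e / 3)" by (rule borel_integrable_atLeastAtMost'[OF continuous_on_const])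
    show "T x \<le> g x + e / 3" if "x \<in> {0..1}" for x using app that by (metis abs_diff_less_iff less_eq_real_def add.commute diff_less_eq)
  qed
  also have "\<dots> = set_lebesgue_integral lborel {0..1} g + e/3"
    using sg by (subst set_integral_add) (auto simp: set_integrable_def set_integral_const)
  finally have Tg: "set_lebesgue_integral lborel {0..1} T \<le> set_lebesgue_integral lborel {0..1} g + e/3" .
  have ev: "eventually (\<lambda>n. (\<integral>\<omega>. T (frac (Z n \<omega>)) \<partial>M) < set_lebesgue_integral lborel {0..1} T + e/3) sequentially"
    using lim e by (intro order_tendstoD) auto
  show ?thesis
  proof (rule eventually_mono[OF ev])
    fix n assume n: "(\<integral>\<omega>. T (frac (Z n \<omega>)) \<partial>M) < set_lebesgue_integral lborel {0..1} T + e/3"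
    define A where "A = {\<omega>\<in>space M. frac (Z n \<omega>) \<le> t}"
    have Am: "A \<in> sets M" unfolding A_def using Zm[of n] by measurable
    have "measure M A = (\<integral>\<omega>. indicator A \<omega> \<partial>M)"
      using Am by (simp add: Bochner_Integration.integral_indicator)
    also have "\<dots> \<le> (\<integral>\<omega>. g (frac (Z n \<omega>)) \<partial>M)"
    proof (rule integral_mono)
      show "integrable M (indicator A :: 'a \<Rightarrow> real)" using Am by (simp add: less_top[symmetric])
      show "integrable M (\<lambda>\<omega>. g (frac (Z n \<omega>)))"
        by (rule integrable_const_bound[where B=1]) (use gb gm Zm[of n] in auto)
      show "indicator A \<omega> \<le> g (frac (Z n \<omega>))" if "\<omega> \<in> space M" for \<omega>
        using ind[of "frac (Z n \<omega>)"] gb[of "frac (Z n \<omega>)"] that frac_lt_1[of "Z n \<omega>"] frac_ge_0[of "Z n \<omega>"]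
        by (auto simp: A_def indicator_def)
    qed
    also have "\<dots> \<le> (\<integral>\<omega>. T (frac (Z n \<omega>)) + e/3 \<partial>M)"
    proof (rule integral_mono)
      show "integrable M (\<lambda>\<omega>. g (frac (Z n \<omega>)))"
        by (rule integrable_const_bound[where B=1]) (use gb gm Zm[of n] in auto)
      show "integrable M (\<lambda>\<omega>. T (frac (Z n \<omega>)) + e/3)" using int by simp
      show "g (frac (Z n \<omega>)) \<le> T (frac (Z n \<omega>)) + e/3" for \<omega>
      proof -
        have "frac (Z n \<omega>) \<in> {0..1}" using frac_lt_1[of "Z n \<omega>"] frac_ge_0[of "Z n \<omega>"] by auto
        then have "\<bar>g (frac (Z n \<omega>)) - T (frac (Z n \<omega>))\<bar> < e/3" using app by blast
        then show ?thesis by linarith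
      qed
    qed
    also have "\<dots> = (\<integral>\<omega>. T (frac (Z n \<omega>)) \<partial>M) + e/3"
      using int by (simp add: prob_space)
    finally show "measure M {\<omega>\<in>space M. frac (Z n \<omega>) \<le> t} < set_lebesgue_integral lborel {0..1} g + e"
      using n Tg unfolding A_def by linarith
  qed
qed

lemma weyl_lower:
  assumes M: "prob_space M" and Zm: "\<And>n. Z n \<in> borel_measurable M"
    and hyp: "\<And>h::int. h \<noteq> 0 \<Longrightarrow> (\<lambda>n. \<integral>\<omega>. cis (2*pi * of_int h * Z n \<omega>) \<partial>M) \<longlonglongrightarrow> 0"
    and gc: "continuous_on UNIV g" and g01: "g 0 = g 1" and gb: "\<And>\<theta>. 0 \<le> g \<theta> \<and> g \<theta> \<le> 1"
    and ind: "\<And>\<theta>. 0 \<le> \<theta> \<Longrightarrow> \<theta> < 1 \<Longrightarrow> t < \<theta> \<Longrightarrow> g \<theta> \<le> 0"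
    and e: "e > 0"
  shows "eventually (\<lambda>n. set_lebesgue_integral lborel {0..1} g - e < measure M {\<omega>\<in>space M. frac (Z n \<omega>) \<le> t}) sequentially"
proof -
  interpret prob_space M by (rule M)
  obtain T c H where H: "finite H" and T: "\<forall>\<theta>. complex_of_real (T \<theta>) = trigp c H \<theta>"
    and app: "\<forall>\<theta>\<in>{0..1}. \<bar>g \<theta> - T \<theta>\<bar> < e/3"
    and int: "\<And>n. integrable M (\<lambda>\<omega>. T (frac (Z n \<omega>)))"
    and lim: "(\<lambda>n. \<integral>\<omega>. T (frac (Z n \<omega>)) \<partial>M) \<longlonglongrightarrow> set_lebesgue_integral lborel {0..1} T"
    using weyl_helper[OF M Zm hyp gc g01, of "e/3"] e by auto
  have Teq: "T = (\<lambda>\<theta>. Re (trigp c H \<theta>))"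
    using T by (metis Re_complex_of_real)
  have gm: "g \<in> borel_measurable borel" using gc by (rule borel_measurable_continuous_onI)
  have sT: "set_integrable lborel {0..1} T"
    unfolding Teq by (intro borel_integrable_atLeastAtMost' continuous_intros continuous_trigp)
  have sg: "set_integrable lborel {0..1} g"
    by (intro borel_integrable_atLeastAtMost' continuous_on_subset[OF gc]) auto
  have sc: "set_integrable lborel {0..1::real} (\<lambda>_. e / 3)" 
    by (rule borel_integrable_atLeastAtMost'[OF continuous_on_const])
  have "set_lebesgue_integral lborel {0..1} g - e/3 = set_lebesgue_integral lborel {0..1} (\<lambda>\<theta>. g \<theta> - e/3)"
    using sg sc by (subst set_integral_diff) (auto simp: set_integral_const)
  also have "\<dots> \<le> set_lebesgue_integral lborel {0..1} T"
  proof (intro set_integral_mono sT set_integral_diff sg sc)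
    show "g x - e / 3 \<le> T x" if "x \<in> {0..1}" for x
    proof -
      have "\<bar>g x - T x\<bar> < e/3" using app that by blast
      then show ?thesis by linarith
    qed
  qed
  finally have Tg: "set_lebesgue_integral lborel {0..1} g - e/3 \<le> set_lebesgue_integral lborel {0..1} T" .
  have ev: "eventually (\<lambda>n. set_lebesgue_integral lborel {0..1} T - e/3 < (\<integral>\<omega>. T (frac (Z n \<omega>)) \<partial>M)) sequentially"
    using lim e by (intro order_tendstoD) auto
  show ?thesis
  proof (rule eventually_mono[OF ev])
    fix n assume n: "set_lebesgue_integral lborel {0..1} T - e/3 < (\<integral>\<omega>. T (frac (Z n \<omega>)) \<partial>M)"
    define A where "A = {\<omega>\<in>space M. frac (Z n \<omega>) \<le> t}"
    have Am: "A \<in> sets M" unfolding A_def using Zm[of n] by measurable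
    have "(\<integral>\<omega>. T (frac (Z n \<omega>)) \<partial>M) - e/3 = (\<integral>\<omega>. T (frac (Z n \<omega>)) - e/3 \<partial>M)"
      using int by (simp add: prob_space)
    also have "\<dots> \<le> (\<integral>\<omega>. g (frac (Z n \<omega>)) \<partial>M)"
    proof (rule integral_mono)
      show "integrable M (\<lambda>\<omega>. g (frac (Z n \<omega>)))"
        by (rule integrable_const_bound[where B=1]) (use gb gm Zm[of n] in auto)
      show "integrable M (\<lambda>\<omega>. T (frac (Z n \<omega>)) - e/3)" using int by simp
      show "T (frac (Z n \<omega>)) - e/3 \<le> g (frac (Z n \<omega>))" for \<omega>
      proof -
        have "frac (Z n \<omega>) \<in> {0..1}" using frac_lt_1[of "Z n \<omega>"] frac_ge_0[of "Z n \<omega>"] by auto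
        then have "\<bar>g (frac (Z n \<omega>)) - T (frac (Z n \<omega>))\<bar> < e/3" using app by blast
        then show ?thesis by linarith
      qed
    qed
    also have "\<dots> \<le> (\<integral>\<omega>. indicator A \<omega> \<partial>M)"
    proof (rule integral_mono)
      show "integrable M (indicator A :: 'a \<Rightarrow> real)" using Am by (simp add: less_top[symmetric])
      show "integrable M (\<lambda>\<omega>. g (frac (Z n \<omega>)))"
        by (rule integrable_const_bound[where B=1]) (use gb gm Zm[of n] in auto)
      show "g (frac (Z n \<omega>)) \<le> indicator A \<omega>" if "\<omega> \<in> space M" for \<omega>
        using ind[of "frac (Z n \<omega>)"] gb[of "frac (Z n \<omega>)"] that frac_lt_1[of "Z n \<omega>"] frac_ge_0[of "Z n \<omega>"]
        by (auto simp: A_def indicator_def)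
    qed
    also have "\<dots> = measure M A"
      using Am by (simp add: Bochner_Integration.integral_indicator)
    finally show "set_lebesgue_integral lborel {0..1} g - e < measure M {\<omega>\<in>space M. frac (Z n \<omega>) \<le> t}"
      using n Tg unfolding A_def by linarith
  qed
qed



lemma int_upper_bound:
  fixes g :: "real \<Rightarrow> real"
  assumes "0 \<le> a" "a \<le> 1" "0 < d" "d \<le> 1" and gc: "continuous_on UNIV g"
    and gb: "\<And>\<theta>. \<theta> \<in> {0..1} \<Longrightarrow> g \<theta> \<le> indicator {0..a} \<theta> + indicator {1-d..1} \<theta>"
  shows "set_lebesgue_integral lborel {0..1} g \<le> a + d"
proof -
  have "set_lebesgue_integral lborel {0..1} g \<le> set_lebesgue_integral lborel {0..1} (\<lambda>\<theta>. indicator {0..a} \<theta> + indicator {1-d..1} \<theta> :: real)"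
  proof (rule set_integral_mono)
    show "set_integrable lborel {0..1} g"
      by (intro borel_integrable_atLeastAtMost' continuous_on_subset[OF gc]) auto
    show "set_integrable lborel {0..1} (\<lambda>\<theta>. indicator {0..a} \<theta> + indicator {1-d..1} \<theta> :: real)"
      unfolding set_integrable_def
      by (intro integrable_mult_indicator integrable_add) (auto simp: less_top[symmetric] emeasure_lborel_Icc_eq)
  qed (use gb in auto)
  also have "\<dots> = integral\<^sup>L lborel (\<lambda>\<theta>. indicator {0..a} \<theta> + indicator {1-d..1} \<theta> :: real)"
    unfolding set_lebesgue_integral_def
    by (intro Bochner_Integration.integral_cong) (use assms in \<open>auto simp: indicator_def\<close>)
  also have "\<dots> = a + d"
    using assms
    by (subst Bochner_Integration.integral_add) (auto simp: less_top[symmetric] emeasure_lborel_Icc_eq Bochner_Integration.integral_indicator)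
  finally show ?thesis .
qed

lemma int_lower_bound:
  fixes g :: "real \<Rightarrow> real"
  assumes "0 \<le> a" "a \<le> b" "b \<le> 1" and gc: "continuous_on UNIV g"
    and gb: "\<And>\<theta>. \<theta> \<in> {0..1} \<Longrightarrow> indicator {a..b} \<theta> \<le> g \<theta>"
  shows "b - a \<le> set_lebesgue_integral lborel {0..1} g"
proof -
  have "b - a = integral\<^sup>L lborel (\<lambda>\<theta>. indicator {a..b} \<theta> :: real)"
    using assms by (simp add: Bochner_Integration.integral_indicator)
  also have "\<dots> = set_lebesgue_integral lborel {0..1} (\<lambda>\<theta>. indicator {a..b} \<theta> :: real)"
    unfolding set_lebesgue_integral_def
    by (intro Bochner_Integration.integral_cong) (use assms in \<open>auto simp: indicator_def\<close>)
  also have "\<dots> \<le> set_lebesgue_integral lborel {0..1} g"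
  proof (rule set_integral_mono)
    show "set_integrable lborel {0..1} g"
      by (intro borel_integrable_atLeastAtMost' continuous_on_subset[OF gc]) auto
    show "set_integrable lborel {0..1} (\<lambda>\<theta>. indicator {a..b} \<theta> :: real)"
      unfolding set_integrable_def
      by (intro integrable_mult_indicator) (auto simp: less_top[symmetric] emeasure_lborel_Icc_eq)
  qed (use gb in auto)
  finally show ?thesis .
qed

lemma weyl_cdf:
  assumes M: "prob_space M" and Zm: "\<And>n. Z n \<in> borel_measurable M"
    and hyp: "\<And>h::int. h \<noteq> 0 \<Longrightarrow> (\<lambda>n. \<integral>\<omega>. cis (2*pi * of_int h * Z n \<omega>) \<partial>M) \<longlonglongrightarrow> 0"
    and t: "0 \<le> t" "t \<le> 1"
  shows "(\<lambda>n. measure M {\<omega>\<in>space M. frac (Z n \<omega>) \<le> t}) \<longlonglongrightarrow> t"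
proof (rule order_tendstoI)
  interpret prob_space M by (rule M)
  fix a assume a: "t < a"
  show "eventually (\<lambda>n. measure M {\<omega>\<in>space M. frac (Z n \<omega>) \<le> t} < a) sequentially"
  proof (cases "a > 1")
    case True
    then show ?thesis by (intro always_eventually allI) (meson le_less_trans prob_le_1)
  next
    case False
    define d where "d = (a - t) / 4"
    have d: "0 < d" "t + d \<le> 1" "d \<le> 1" using a False t by (auto simp: d_def field_simps)
    define g where "g \<theta> = max 0 (max (min 1 ((t+d-\<theta>)/d)) ((\<theta>-1+d)/d))" for \<theta>
    have gc: "continuous_on UNIV g" unfolding g_def by (intro continuous_intros) (use d in auto)
    have g01: "g 0 = g 1" using d t by (simp add: g_def)
    have gb: "0 \<le> g \<theta> \<and> g \<theta> \<le> 1" if "\<theta> \<le> 1" for \<theta>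
      using d that by (auto simp: g_def field_simps)
    have gb': "0 \<le> g \<theta> \<and> g \<theta> \<le> 1" if "0 \<le> \<theta>" "\<theta> \<le> 1" for \<theta> using gb that by auto
    (* clipping to get global bound *)
    define g' where "g' \<theta> = min 1 (g \<theta>)" for \<theta>
    have g'c: "continuous_on UNIV g'" unfolding g'_def by (intro continuous_intros gc)
    have g'01: "g' 0 = g' 1" using g01 by (simp add: g'_def)
    have g'b: "0 \<le> g' \<theta> \<and> g' \<theta> \<le> 1" for \<theta> by (auto simp: g'_def g_def)
    have ind: "1 \<le> g' \<theta>" if "0 \<le> \<theta>" "\<theta> < 1" "\<theta> \<le> t" for \<theta>
      using that d by (auto simp: g'_def g_def field_simps)
    have ev: "eventually (\<lambda>n. measure M {\<omega>\<in>space M. frac (Z n \<omega>) \<le> t} < set_lebesgue_integral lborel {0..1} g' + d) sequentially"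
      by (rule weyl_upper[OF M Zm hyp g'c g'01 g'b ind]) (use d in auto)
    have "set_lebesgue_integral lborel {0..1} g' \<le> (t + d) + d"
    proof (rule int_upper_bound[OF _ _ _ _ g'c])
      fix \<theta> :: real assume th: "\<theta> \<in> {0..1}"
      show "g' \<theta> \<le> indicator {0..t + d} \<theta> + indicator {1 - d..1} \<theta>"
      proof (cases "\<theta> \<le> t + d")
        case True then show ?thesis using th g'b[of \<theta>] by (auto simp: indicator_def)
      next
        case False
        then have "(t+d-\<theta>)/d < 0" using d by (simp add: field_simps)
        then show ?thesis using th d False
          by (auto simp: indicator_def g'_def g_def field_simps)
      qed
    qed (use d t in auto)
    then have "set_lebesgue_integral lborel {0..1} g' + d \<le> a" using a unfolding d_def by (simp add: field_simps)
    then show ?thesis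
      by (intro eventually_mono[OF ev]) linarith
  qed
next
  interpret prob_space M by (rule M)
  fix a assume a: "a < t"
  show "eventually (\<lambda>n. a < measure M {\<omega>\<in>space M. frac (Z n \<omega>) \<le> t}) sequentially"
  proof (cases "a < 0")
    case True
    then show ?thesis by (intro always_eventually allI) (meson less_le_trans measure_nonneg)
  next
    case False
    define d where "d = (t - a) / 4"
    have d: "0 < d" "d \<le> t - 2*d" "t \<le> 1" using a False t by (auto simp: d_def field_simps)
    define g where "g \<theta> = max 0 (min 1 (min (\<theta>/d) ((t-\<theta>)/d)))" for \<theta>
    have gc: "continuous_on UNIV g" unfolding g_def by (intro continuous_intros) (use d in auto)
    have "(t-1)/d \<le> 0" using d t by (simp add: divide_nonpos_pos)
    then have g01: "g 0 = g 1" using d t by (simp add: g_def)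
    have gb: "0 \<le> g \<theta> \<and> g \<theta> \<le> 1" for \<theta> by (auto simp: g_def)
    have ind: "g \<theta> \<le> 0" if "0 \<le> \<theta>" "\<theta> < 1" "t < \<theta>" for \<theta>
      using that d by (auto simp: g_def field_simps)
    have ev: "eventually (\<lambda>n. set_lebesgue_integral lborel {0..1} g - d < measure M {\<omega>\<in>space M. frac (Z n \<omega>) \<le> t}) sequentially"
      by (rule weyl_lower[OF M Zm hyp gc g01 gb ind]) (use d in auto)
    have "(t - d) - d \<le> set_lebesgue_integral lborel {0..1} g"
    proof (rule int_lower_bound[OF _ _ _ gc])
      fix \<theta> :: real assume th: "\<theta> \<in> {0..1}"
      show "indicator {d..t-d} \<theta> \<le> g \<theta>"
        using th d gb[of \<theta>] by (auto simp: indicator_def g_def field_simps)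
    qed (use d t in auto)
    then have "a \<le> set_lebesgue_integral lborel {0..1} g - d" using a unfolding d_def by (simp add: field_simps)
    then show ?thesis
      by (intro eventually_mono[OF ev]) linarith
  qed
qed



lemma cis_eq_imp: "cis a = cis b \<Longrightarrow> \<exists>n::int. a = b + 2 * pi * of_int n"
proof -
  assume "cis a = cis b"
  then have "exp (\<i> * complex_of_real a) = exp (\<i> * complex_of_real b)" by (simp add: cis_conv_exp)
  then obtain n :: int where "\<i> * complex_of_real a = \<i> * complex_of_real b + (of_int (2 * n) * pi) * \<i>"
    by (auto simp: exp_eq)
  then have "\<i> * (complex_of_real a - complex_of_real (b + 2 * pi * of_int n)) = 0"
    by (simp add: algebra_simps)
  then have "complex_of_real a = complex_of_real (b + 2 * pi * of_int n)"
    by simp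
  then show ?thesis by (intro exI[of _ n]) (simp only: of_real_eq_iff)
qed

lemma norm1_cis: "norm z = 1 \<Longrightarrow> \<exists>\<alpha>. z = cis \<alpha>"
  using Arg2pi[of z] by (auto simp: is_Arg_def cis_conv_exp)

lemma char_lt_1:
  assumes M: "prob_space M" and X: "X \<in> borel_measurable M"
    and atomless: "\<And>x. measure M {\<omega>\<in>space M. X \<omega> = x} = 0"
    and u: "u \<noteq> 0"
  shows "norm (\<integral>\<omega>. cis (u * X \<omega>) \<partial>M) < 1"
proof -
  interpret prob_space M by (rule M)
  define \<phi> where "\<phi> = (\<integral>\<omega>. cis (u * X \<omega>) \<partial>M)"
  have "(\<lambda>x. cis (u * x)) \<in> borel_measurable borel"
    by (intro borel_measurable_continuous_onI continuous_intros)
  from measurable_compose[OF X this]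
  have cm: "(\<lambda>\<omega>. cis (u * X \<omega>)) \<in> borel_measurable M" by simp
  have int: "integrable M (\<lambda>\<omega>. cis (u * X \<omega>))"
    by (rule integrable_const_bound[where B=1]) (use cm in auto)
  have le: "norm \<phi> \<le> 1"
    unfolding \<phi>_def
    using integral_norm_bound[of M "\<lambda>\<omega>. cis (u * X \<omega>)"] by (simp add: prob_space)
  show ?thesis
  proof (rule ccontr)
    assume "\<not> norm (\<integral>\<omega>. cis (u * X \<omega>) \<partial>M) < 1"
    then have n1: "norm \<phi> = 1" using le by (simp add: \<phi>_def)
    define f where "f \<omega> = 1 - Re (cnj \<phi> * cis (u * X \<omega>))" for \<omega>
    have fint: "integrable M f"
      unfolding f_def by (intro Bochner_Integration.integrable_diff integrable_const integrable_Re integrable_mult_right int)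
    have im: "integrable M (\<lambda>\<omega>. cnj \<phi> * cis (u * X \<omega>))"
      by (intro integrable_mult_right int)
    have iR: "integrable M (\<lambda>\<omega>. Re (cnj \<phi> * cis (u * X \<omega>)))"
      by (intro integrable_Re im)
    have "(\<integral>\<omega>. f \<omega> \<partial>M) = 1 - (\<integral>\<omega>. Re (cnj \<phi> * cis (u * X \<omega>)) \<partial>M)"
      unfolding f_def using iR
      by (subst Bochner_Integration.integral_diff) (auto simp: prob_space)
    also have "(\<integral>\<omega>. Re (cnj \<phi> * cis (u * X \<omega>)) \<partial>M) = Re (\<integral>\<omega>. cnj \<phi> * cis (u * X \<omega>) \<partial>M)"
      by (rule integral_bounded_linear[OF bounded_linear_Re im])
    also have "(\<integral>\<omega>. cnj \<phi> * cis (u * X \<omega>) \<partial>M) = cnj \<phi> * \<phi>"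
      unfolding \<phi>_def by (rule integral_mult_right_zero)
    also have "cnj \<phi> * \<phi> = 1"
      using n1 by (metis complex_norm_square mult.commute of_real_1 power_one)
    finally have "(\<integral>\<omega>. f \<omega> \<partial>M) = 0" by simp
    moreover have fnn: "0 \<le> f \<omega>" for \<omega>
    proof -
      have "Re (cnj \<phi> * cis (u * X \<omega>)) \<le> norm (cnj \<phi> * cis (u * X \<omega>))" by (rule complex_Re_le_cmod)
      also have "\<dots> = 1" using n1 by (simp add: norm_mult)
      finally show ?thesis by (simp add: f_def)
    qed
    ultimately have "AE \<omega> in M. f \<omega> = 0"
      using integral_nonneg_eq_0_iff_AE[OF fint] by auto
    then have AE1: "AE \<omega> in M. cis (u * X \<omega>) = \<phi>"
    proof (rule eventually_mono)
      fix \<omega> assume "f \<omega> = 0"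
      define z where "z = cnj \<phi> * cis (u * X \<omega>)"
      have "Re z = 1" using \<open>f \<omega> = 0\<close> by (simp add: f_def z_def)
      moreover have "norm z = 1" using n1 by (simp add: z_def norm_mult)
      ultimately have "(Im z)^2 = 0" using cmod_power2[of z] by simp
      then have "z = 1" using \<open>Re z = 1\<close> by (simp add: complex_eq_iff)
      then have "\<phi> * z = \<phi>" by simp
      moreover have "\<phi> * z = cis (u * X \<omega>)"
        using \<open>cnj \<phi> * \<phi> = 1\<close> by (simp add: z_def mult.assoc[symmetric] mult.commute[of \<phi>])
      ultimately show "cis (u * X \<omega>) = \<phi>" by simp
    qed
    obtain \<alpha> where \<alpha>: "\<phi> = cis \<alpha>" using norm1_cis[OF n1] by blast
    define C where "C = (\<lambda>n::int. (\<alpha> + 2 * pi * of_int n) / u) ` UNIV"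
    have Cc: "countable C" unfolding C_def by simp
    have Cb: "C \<in> sets borel" by (rule sets.countable[OF _ Cc]) auto
    have "AE \<omega> in M. X \<omega> \<in> C"
      using AE1
    proof (rule eventually_mono)
      fix \<omega> assume "cis (u * X \<omega>) = \<phi>"
      then obtain n :: int where "u * X \<omega> = \<alpha> + 2 * pi * of_int n"
        using cis_eq_imp \<alpha> by metis
      then have "X \<omega> = (\<alpha> + 2 * pi * of_int n) / u" using u by (simp add: field_simps)
      then show "X \<omega> \<in> C" unfolding C_def by blast
    qed
    then have p1: "prob {\<omega>\<in>space M. X \<omega> \<in> C} = 1"
    proof -
      have A: "{\<omega>\<in>space M. X \<omega> \<in> C} \<in> events"
        using X Cb by measurable
      have "AE \<omega> in M. \<omega> \<in> {\<omega>\<in>space M. X \<omega> \<in> C}"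
        using AE_space \<open>AE \<omega> in M. X \<omega> \<in> C\<close> by eventually_elim auto
      then show ?thesis using prob_eq_1[OF A] by simp
    qed
    have "emeasure (distr M borel X) C = (\<integral>\<^sup>+x. emeasure (distr M borel X) {x} \<partial>count_space C)"
      by (rule emeasure_countable_singleton[OF _ Cc]) auto
    also have "\<dots> = 0"
    proof (rule nn_integral_zero')
      show "AE x in count_space C. emeasure (distr M borel X) {x} = 0"
      proof (intro AE_I2)
        fix x
        have "emeasure (distr M borel X) {x} = emeasure M {\<omega>\<in>space M. X \<omega> = x}"
          using X by (subst emeasure_distr) (auto intro!: arg_cong[where f="emeasure M"])
        also have "\<dots> = 0"
          using atomless[of x] X by (simp add: emeasure_eq_measure)
        finally show "emeasure (distr M borel X) {x} = 0" .
      qed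
    qed
    moreover have "emeasure (distr M borel X) C = emeasure M (X -` C \<inter> space M)"
      using X Cb by (rule emeasure_distr)
    moreover have "X -` C \<inter> space M = {\<omega>\<in>space M. X \<omega> \<in> C}" by auto
    ultimately have "emeasure M {\<omega>\<in>space M. X \<omega> \<in> C} = 0" by simp
    then show False using p1 by (simp add: emeasure_eq_measure)
  qed
qed



lemma log_prod_pos:
  assumes "finite A" "\<And>j. j \<in> A \<Longrightarrow> f j > 0" "B > 0" "B \<noteq> 1"
  shows "log B (\<Prod>j\<in>A. f j) = (\<Sum>j\<in>A. log B (f j))"
  using assms
proof (induction A rule: finite_induct)
  case (insert x F)
  have "log B (\<Prod>j\<in>insert x F. f j) = log B (f x * (\<Prod>j\<in>F. f j))"
    using insert by simp
  also have "\<dots> = log B (f x) + log B (\<Prod>j\<in>F. f j)"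
    using insert by (intro log_mult_pos) (auto intro!: prod_pos)
  finally show ?case using insert by simp
qed simp

lemma cis_sum: "finite A \<Longrightarrow> cis (\<Sum>j\<in>A. f j) = (\<Prod>j\<in>A. cis (f j))"
  by (induction A rule: finite_induct) (simp_all add: cis_mult[symmetric])

lemma significand_le_iff:
  assumes B: "B > 1" and x: "x > 0" and D: "D > 0"
  shows "significand B x \<le> D \<longleftrightarrow> frac (log B x) \<le> log B D"
proof -
  have "significand B x = B powr (log B x) / B powr (of_int \<lfloor>log B x\<rfloor>)"
    using B x by (simp add: significand_def)
  also have "\<dots> = B powr frac (log B x)"
    using B by (simp add: frac_def powr_diff)
  finally have s: "significand B x = B powr frac (log B x)" .
  have "B powr frac (log B x) \<le> D \<longleftrightarrow> log B (B powr frac (log B x)) \<le> log B D"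
    using B D by (subst log_le_cancel_iff) auto
  also have "\<dots> \<longleftrightarrow> frac (log B x) \<le> log B D"
    using B by simp
  finally show ?thesis using s by simp
qed

theorem corollary1p8:
  fixes M :: "'a measure" and B :: real and m :: nat
    and a b :: "nat \<Rightarrow> real"
    and lo hi :: "nat \<Rightarrow> 'a \<Rightarrow> nat \<Rightarrow> real"
    and P :: "nat \<Rightarrow> nat \<Rightarrow> 'a \<Rightarrow> real"
    and \<mu> \<sigma>2 :: real
  assumes "prob_space M"
    and "B > 1"
    and "m \<ge> 1"
    and box0: "\<And>i. i < m \<Longrightarrow> a i < b i"
    and start: "\<And>\<omega> i. \<omega> \<in> space M \<Longrightarrow> i < m \<Longrightarrow> lo 0 \<omega> i = a i \<and> hi 0 \<omega> i = b i"
    and nested: "\<And>n \<omega> i. \<omega> \<in> space M \<Longrightarrow> i < m \<Longrightarrow>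
         lo n \<omega> i \<le> lo (Suc n) \<omega> i \<and> lo (Suc n) \<omega> i < hi (Suc n) \<omega> i \<and> hi (Suc n) \<omega> i \<le> hi n \<omega> i"
    and cut: "\<And>n \<omega> i. \<omega> \<in> space M \<Longrightarrow> i < m \<Longrightarrow>
         hi (Suc n) \<omega> i - lo (Suc n) \<omega> i = P i (Suc n) \<omega> * (hi n \<omega> i - lo n \<omega> i)"
    and meas: "\<And>i n. i < m \<Longrightarrow> n \<ge> 1 \<Longrightarrow> P i n \<in> borel_measurable M"
    and range01: "\<And>i n \<omega>. i < m \<Longrightarrow> n \<ge> 1 \<Longrightarrow> \<omega> \<in> space M \<Longrightarrow> 0 < P i n \<omega> \<and> P i n \<omega> < 1"
    and indep: "prob_space.indep_vars M (\<lambda>_. borel) (\<lambda>(i, n). P i n) ({..<m} \<times> {1..})"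
    and ident: "\<And>i n. i < m \<Longrightarrow> n \<ge> 1 \<Longrightarrow> distr M borel (P i n) = distr M borel (P i 1)"
    and continuous: "\<And>i x. i < m \<Longrightarrow> measure M {\<omega>\<in>space M. P i 1 \<omega> = x} = 0"
    and int1: "\<And>i. i < m \<Longrightarrow> integrable M (\<lambda>\<omega>. log B (P i 1 \<omega>))"
    and int2: "\<And>i. i < m \<Longrightarrow> integrable M (\<lambda>\<omega>. (log B (P i 1 \<omega>))\<^sup>2)"
    and int3: "\<And>i. i < m \<Longrightarrow> integrable M (\<lambda>\<omega>. \<bar>log B (P i 1 \<omega>)\<bar> ^ 3)"
    and mean: "\<And>i. i < m \<Longrightarrow> prob_space.expectation M (\<lambda>\<omega>. log B (P i 1 \<omega>)) = \<mu>"
    and var: "\<And>i. i < m \<Longrightarrow> prob_space.variance M (\<lambda>\<omega>. log B (P i 1 \<omega>)) = \<sigma>2"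
    and "\<sigma>2 > 0"
  shows "strong_Benford M B (\<lambda>n \<omega>. box_vol m (lo n \<omega>) (hi n \<omega>))"

proof -
  interpret prob_space M by fact
  have B1: "B > 1" by fact
  define V0 where "V0 = (\<Prod>i<m. b i - a i)"
  have V0: "V0 > 0" unfolding V0_def using box0 by (intro prod_pos) auto
  define J where "J n = {..<m} \<times> {1..n}" for n :: nat
  have Jfin: "finite (J n)" for n unfolding J_def by simp
  define Z where "Z n \<omega> = log B V0 + (\<Sum>j\<in>J n. log B (P (fst j) (snd j) \<omega>))" for n \<omega>
  have Ppos: "P (fst j) (snd j) \<omega> > 0" if "j \<in> J n" "\<omega> \<in> space M" for j n \<omega>
    using range01[of "fst j" "snd j" \<omega>] that by (auto simp: J_def)
  have side: "hi n \<omega> i - lo n \<omega> i = (b i - a i) * (\<Prod>k\<in>{1..n}. P i k \<omega>)"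
    if "\<omega> \<in> space M" "i < m" for n \<omega> i
  proof (induction n)
    case 0 then show ?case using start[OF that] by simp
  next
    case (Suc n)
    have "hi (Suc n) \<omega> i - lo (Suc n) \<omega> i = P i (Suc n) \<omega> * ((b i - a i) * (\<Prod>k\<in>{1..n}. P i k \<omega>))"
      using cut[OF that, of n] Suc by simp
    also have "\<dots> = (b i - a i) * (\<Prod>k\<in>{1..Suc n}. P i k \<omega>)"
      by (simp add: prod.cl_ivl_Suc algebra_simps)
    finally show ?case .
  qed
  have vol: "box_vol m (lo n \<omega>) (hi n \<omega>) = V0 * (\<Prod>j\<in>J n. P (fst j) (snd j) \<omega>)"
    if "\<omega> \<in> space M" for n \<omega>
  proof -
    have "box_vol m (lo n \<omega>) (hi n \<omega>) = (\<Prod>i<m. (b i - a i) * (\<Prod>k\<in>{1..n}. P i k \<omega>))"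
      unfolding box_vol_def using side[OF that] by (intro prod.cong) auto
    also have "\<dots> = V0 * (\<Prod>i<m. \<Prod>k\<in>{1..n}. P i k \<omega>)"
      unfolding V0_def prod.distrib ..
    also have "(\<Prod>i<m. \<Prod>k\<in>{1..n}. P i k \<omega>) = (\<Prod>j\<in>J n. P (fst j) (snd j) \<omega>)"
      unfolding J_def by (simp add: prod.cartesian_product case_prod_beta)
    finally show ?thesis .
  qed
  have volpos: "box_vol m (lo n \<omega>) (hi n \<omega>) > 0" if "\<omega> \<in> space M" for n \<omega>
    unfolding vol[OF that] using V0 Ppos[OF _ that] by (intro mult_pos_pos prod_pos) auto
  have logvol: "log B (box_vol m (lo n \<omega>) (hi n \<omega>)) = Z n \<omega>" if "\<omega> \<in> space M" for n \<omega>
  proof -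
    have "log B (box_vol m (lo n \<omega>) (hi n \<omega>)) = log B V0 + log B (\<Prod>j\<in>J n. P (fst j) (snd j) \<omega>)"
      unfolding vol[OF that] using V0 Ppos[OF _ that] by (intro log_mult_pos prod_pos) auto
    also have "log B (\<Prod>j\<in>J n. P (fst j) (snd j) \<omega>) = (\<Sum>j\<in>J n. log B (P (fst j) (snd j) \<omega>))"
      using Ppos[OF _ that] B1 Jfin by (intro log_prod_pos) auto
    finally show ?thesis unfolding Z_def .
  qed
  have Pm: "(\<lambda>\<omega>. P (fst j) (snd j) \<omega>) \<in> borel_measurable M" if "j \<in> J n" for j n
    using meas[of "fst j" "snd j"] that by (auto simp: J_def)
  have Zm: "Z n \<in> borel_measurable M" for n
    unfolding Z_def
    by (intro borel_measurable_add borel_measurable_const borel_measurable_sum borel_measurable_log Pm) 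
  have hyp: "(\<lambda>n. \<integral>\<omega>. cis (2*pi * of_int h * Z n \<omega>) \<partial>M) \<longlonglongrightarrow> 0" if h: "h \<noteq> 0" for h :: int
  proof -
    define u where "u = 2*pi * of_int h"
    have u: "u \<noteq> 0" using h by (simp add: u_def)
    define f where "f x = cis (u * log B x)" for x
    have lm: "(\<lambda>x. log B x) \<in> borel_measurable borel" by measurable
    have cm: "(\<lambda>y. cis (u * y)) \<in> borel_measurable borel"
      by (intro borel_measurable_continuous_onI continuous_intros)
    have fm: "f \<in> borel_measurable borel"
      using measurable_compose[OF lm cm] unfolding f_def by simp
    define Y where "Y j \<omega> = f (P (fst j) (snd j) \<omega>)" for j \<omega>
    define \<psi> where "\<psi> i = (\<integral>\<omega>. f (P i 1 \<omega>) \<partial>M)" for i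
    have Ym: "Y j \<in> borel_measurable M" if "j \<in> J n" for j n
      unfolding Y_def using measurable_compose[OF Pm[OF that] fm] by simp
    have Yint: "integrable M (Y j)" if "j \<in> J n" for j n
      by (rule integrable_const_bound[where B=1]) (use Ym[OF that] in \<open>auto simp: Y_def f_def\<close>)
    have EY: "(\<integral>\<omega>. Y j \<omega> \<partial>M) = \<psi> (fst j)" if "j \<in> J n" for j n
    proof -
      have i: "fst j < m" "snd j \<ge> 1" using that by (auto simp: J_def)
      have "(\<integral>\<omega>. Y j \<omega> \<partial>M) = integral\<^sup>L (distr M borel (P (fst j) (snd j))) f"
        unfolding Y_def by (rule integral_distr[symmetric, OF meas[OF i] fm])
      also have "\<dots> = integral\<^sup>L (distr M borel (P (fst j) 1)) f"
        using ident[OF i] by simp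
      also have "\<dots> = \<psi> (fst j)"
        unfolding \<psi>_def by (rule integral_distr[OF meas[OF i(1)] fm]) simp
      finally show ?thesis .
    qed
    have indepY: "indep_vars (\<lambda>_. borel) Y (J n)" for n
    proof -
      have "indep_vars (\<lambda>_. borel) (\<lambda>(i, n). P i n) (J n)"
        by (rule indep_vars_subset[OF indep]) (auto simp: J_def)
      then have "indep_vars (\<lambda>_. borel) (\<lambda>j \<omega>. f ((\<lambda>(i, n). P i n) j \<omega>)) (J n)"
        by (rule indep_vars_compose2) (rule fm)
      then show ?thesis
        by (rule indep_vars_cong[THEN iffD1, rotated 3]) (simp_all add: Y_def case_prod_beta fun_eq_iff)
    qed
    have atom: "measure M {\<omega>\<in>space M. log B (P i 1 \<omega>) = x} = 0" if "i < m" for i x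
    proof -
      have "{\<omega>\<in>space M. log B (P i 1 \<omega>) = x} = {\<omega>\<in>space M. P i 1 \<omega> = B powr x}"
      proof (intro Collect_cong conj_cong refl)
        fix \<omega> assume "\<omega> \<in> space M"
        then have p: "P i 1 \<omega> > 0" using range01[OF that, of 1] by simp
        show "log B (P i 1 \<omega>) = x \<longleftrightarrow> P i 1 \<omega> = B powr x"
          using p B1 by (metis less_numeral_extra(4) order_less_trans powr_log_cancel log_powr_cancel zero_less_one)
      qed
      then show ?thesis using continuous[OF that] by simp
    qed
    have \<psi>1: "norm (\<psi> i) < 1" if "i < m" for i
    proof -
      have "(\<lambda>\<omega>. log B (P i 1 \<omega>)) \<in> borel_measurable M"
        using measurable_compose[OF meas[OF that, of 1] lm] by simp
      from char_lt_1[OF \<open>prob_space M\<close> this atom[OF that] u]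
      show ?thesis by (simp add: \<psi>_def f_def)
    qed
    define q where "q = (\<Prod>i<m. \<psi> i)"
    have q: "norm q < 1"
    proof -
      have m0: "0 \<in> {..<m}" using \<open>m \<ge> 1\<close> by auto
      have "norm q = norm (\<psi> 0) * (\<Prod>i\<in>{..<m}-{0}. norm (\<psi> i))"
        unfolding q_def prod_norm[symmetric] by (rule prod.remove[OF _ m0]) simp
      also have "\<dots> \<le> norm (\<psi> 0) * 1"
        using \<psi>1 by (intro mult_left_mono prod_le_1) (auto simp: less_imp_le)
      also have "\<dots> < 1" using \<psi>1[of 0] \<open>m \<ge> 1\<close> by simp
      finally show ?thesis .
    qed
    have E: "(\<integral>\<omega>. cis (2*pi * of_int h * Z n \<omega>) \<partial>M) = cis (u * log B V0) * q ^ n" for n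
    proof -
      have "(\<integral>\<omega>. cis (2*pi * of_int h * Z n \<omega>) \<partial>M) = (\<integral>\<omega>. cis (u * log B V0) * (\<Prod>j\<in>J n. Y j \<omega>) \<partial>M)"
      proof (rule Bochner_Integration.integral_cong[OF refl])
        fix \<omega>
        have "cis (2*pi * of_int h * Z n \<omega>) = cis (u * log B V0 + (\<Sum>j\<in>J n. u * log B (P (fst j) (snd j) \<omega>)))"
          unfolding Z_def u_def by (simp add: algebra_simps sum_distrib_left)
        also have "\<dots> = cis (u * log B V0) * (\<Prod>j\<in>J n. Y j \<omega>)"
          by (simp add: cis_mult[symmetric] cis_sum[OF Jfin] Y_def f_def)
        finally show "cis (2*pi * of_int h * Z n \<omega>) = cis (u * log B V0) * (\<Prod>j\<in>J n. Y j \<omega>)" .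
      qed
      also have "\<dots> = cis (u * log B V0) * (\<Prod>j\<in>J n. \<integral>\<omega>. Y j \<omega> \<partial>M)"
        by (subst integral_mult_right_zero) (subst indep_vars_lebesgue_integral[OF Jfin indepY Yint]; simp)
      also have "(\<Prod>j\<in>J n. \<integral>\<omega>. Y j \<omega> \<partial>M) = (\<Prod>j\<in>J n. \<psi> (fst j))"
        by (intro prod.cong refl EY)
      also have "\<dots> = (\<Prod>i<m. \<Prod>k\<in>{1..n}. \<psi> i)"
        unfolding J_def prod.cartesian_product by (intro prod.cong) auto
      also have "\<dots> = q ^ n"
        by (simp add: q_def prod_power_distrib)
      finally show ?thesis .
    qed
    show ?thesis
      unfolding E by (intro tendsto_mult_right_zero LIMSEQ_power_zero q)
  qed
  show ?thesis
    unfolding strong_Benford_def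
  proof
    fix D assume D: "D \<in> {1..B}"
    have t: "0 \<le> log B D" "log B D \<le> 1" using D B1 by auto
    have "{\<omega>\<in>space M. significand B (box_vol m (lo n \<omega>) (hi n \<omega>)) \<le> D} = {\<omega>\<in>space M. frac (Z n \<omega>) \<le> log B D}" for n
      using significand_le_iff[OF B1 volpos] D logvol by auto
    then show "(\<lambda>n. measure M {\<omega>\<in>space M. significand B (box_vol m (lo n \<omega>) (hi n \<omega>)) \<le> D}) \<longlonglongrightarrow> log B D"
      using weyl_cdf[OF \<open>prob_space M\<close> Zm hyp t] by simp
  qed
qed

end
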